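(* Let $\mathcal{T}$ be a fully sparse tournament. Then the maximum number of pairwise arc-disjoint directed cycles of $\mathcal{T}$ equals the maximum number of pairwise arc-disjoint triangles of $\mathcal{T}$.
   Context: A tournament is an orientation of a complete graph; a triangle is a directed cycle of length 3. Given a linear ordering $\sigma$ of the vertices of $\mathcal{T}$, an arc $uv$ is backward if $v$ comes before $u$ in $\sigma$. $\mathcal{T}$ is fully sparse (with respect to an ordering $\sigma$) if: the backward arcs of $\sigma$ are pairwise vertex-disjoint (form a matching), no backward arc joins two vertices that are consecutive in $\sigma$, and every vertex of $\mathcal{T}$ is the head or the tail of some backward arc. *)

theory Defs
  imports Main
begin

definition tournament :: "'a set \<Rightarrow> ('a \<times> 'a) set \<Rightarrow> bool" where
  "tournament V A \<longleftrightarrow> finite V \<and> A \<subseteq> V \<times> V \<and> (\<forall>v. (v, v) \<notin> A) \<and>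
     (\<forall>u\<in>V. \<forall>v\<in>V. u \<noteq> v \<longrightarrow> ((u, v) \<in> A \<longleftrightarrow> (v, u) \<notin> A))"

definition vertex_ordering :: "'a set \<Rightarrow> 'a list \<Rightarrow> bool" where
  "vertex_ordering V \<sigma> \<longleftrightarrow> distinct \<sigma> \<and> set \<sigma> = V"

definition pos :: "'a list \<Rightarrow> 'a \<Rightarrow> nat" where
  "pos \<sigma> v = (THE i. i < length \<sigma> \<and> \<sigma> ! i = v)"

definition backward_arc :: "('a \<times> 'a) set \<Rightarrow> 'a list \<Rightarrow> 'a \<times> 'a \<Rightarrow> bool" where
  "backward_arc A \<sigma> e \<longleftrightarrow> e \<in> A \<and> pos \<sigma> (snd e) < pos \<sigma> (fst e)"

definition fully_sparse_wrt :: "'a set \<Rightarrow> ('a \<times> 'a) set \<Rightarrow> 'a list \<Rightarrow> bool" where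
  "fully_sparse_wrt V A \<sigma> \<longleftrightarrow> vertex_ordering V \<sigma> \<and>
     \<comment> \<open>backward arcs form a matching\<close>
     (\<forall>e f. backward_arc A \<sigma> e \<and> backward_arc A \<sigma> f \<and> e \<noteq> f \<longrightarrow>
        {fst e, snd e} \<inter> {fst f, snd f} = {}) \<and>
     \<comment> \<open>no backward arc joins consecutive vertices\<close>
     (\<forall>e. backward_arc A \<sigma> e \<longrightarrow> pos \<sigma> (fst e) \<noteq> Suc (pos \<sigma> (snd e))) \<and>
     \<comment> \<open>every vertex is head or tail of a backward arc\<close>
     (\<forall>v\<in>V. \<exists>e. backward_arc A \<sigma> e \<and> (v = fst e \<or> v = snd e))"

definition fully_sparse :: "'a set \<Rightarrow> ('a \<times> 'a) set \<Rightarrow> bool" where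
  "fully_sparse V A \<longleftrightarrow> (\<exists>\<sigma>. fully_sparse_wrt V A \<sigma>)"

definition is_dcycle :: "('a \<times> 'a) set \<Rightarrow> 'a list \<Rightarrow> bool" where
  "is_dcycle A xs \<longleftrightarrow> distinct xs \<and> length xs \<ge> 2 \<and>
     (\<forall>i < length xs. (xs ! i, xs ! ((i + 1) mod length xs)) \<in> A)"

definition cycle_arcs :: "'a list \<Rightarrow> ('a \<times> 'a) set" where
  "cycle_arcs xs = {(xs ! i, xs ! ((i + 1) mod length xs)) | i. i < length xs}"

definition cycle_packing :: "('a \<times> 'a) set \<Rightarrow> ('a \<times> 'a) set set \<Rightarrow> bool" where
  "cycle_packing A P \<longleftrightarrow>
     (\<forall>S\<in>P. \<exists>xs. is_dcycle A xs \<and> S = cycle_arcs xs) \<and>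
     (\<forall>S\<in>P. \<forall>T\<in>P. S \<noteq> T \<longrightarrow> S \<inter> T = {})"

definition triangle_packing :: "('a \<times> 'a) set \<Rightarrow> ('a \<times> 'a) set set \<Rightarrow> bool" where
  "triangle_packing A P \<longleftrightarrow>
     (\<forall>S\<in>P. \<exists>xs. is_dcycle A xs \<and> length xs = 3 \<and> S = cycle_arcs xs) \<and>
     (\<forall>S\<in>P. \<forall>T\<in>P. S \<noteq> T \<longrightarrow> S \<inter> T = {})"

definition max_cycle_packing :: "('a \<times> 'a) set \<Rightarrow> nat" where
  "max_cycle_packing A = Max {card P | P. cycle_packing A P}"

definition max_triangle_packing :: "('a \<times> 'a) set \<Rightarrow> nat" where
  "max_triangle_packing A = Max {card P | P. triangle_packing A P}"

end

theory Submission
  imports Defs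
begin


definition closedE :: "'v set set \<Rightarrow> 'v set \<Rightarrow> bool" where
  "closedE E X \<longleftrightarrow> (\<forall>x\<in>X. \<forall>y. {x,y} \<in> E \<longrightarrow> y \<in> X)"

definition hallE :: "'v set set \<Rightarrow> 'v set \<Rightarrow> bool" where
  "hallE E N \<longleftrightarrow> (\<forall>X. X \<subseteq> N \<longrightarrow> closedE E X \<longrightarrow> card X \<le> card {e\<in>E. e \<subseteq> X})"

lemma closed_remove:
  assumes "closedE (E - {{i,j}}) X" "i \<notin> X" "j \<notin> X"
  shows "closedE E X"
  unfolding closedE_def
proof (intro ballI allI impI)
  fix x y assume xy: "x \<in> X" "{x,y} \<in> E"
  have "{x,y} \<noteq> {i,j}" using xy(1) assms(2,3) by (auto simp: doubleton_eq_iff)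
  hence "{x,y} \<in> E - {{i,j}}" using xy by simp
  thus "y \<in> X" using xy(1) assms(1) unfolding closedE_def by blast
qed

lemma two_moves:
  assumes fin: "finite N" "finite E" and c2: "\<forall>e\<in>E. card e = 2"
    and H: "hallE E N" and ij: "{i,j} \<in> E" "i \<in> N" "j \<in> N" "i \<noteq> j"
  shows "hallE (E - {{i,j}}) (N - {i}) \<or> hallE (E - {{i,j}}) (N - {j})"
proof (rule ccontr)
  let ?E' = "E - {{i,j}}"
  assume "\<not> ?thesis"
  then obtain X Y where X: "X \<subseteq> N - {i}" "closedE ?E' X" "card {e\<in>?E'. e \<subseteq> X} < card X"
    and Y: "Y \<subseteq> N - {j}" "closedE ?E' Y" "card {e\<in>?E'. e \<subseteq> Y} < card Y"
    unfolding hallE_def by (auto simp: not_le)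
  have finN: "finite X" "finite Y" using X(1) Y(1) fin(1) by (meson finite_Diff finite_subset)+
  have jX: "j \<in> X"
  proof (rule ccontr)
    assume "j \<notin> X"
    hence "closedE E X" using closed_remove[OF X(2)] X(1) by blast
    hence "card X \<le> card {e\<in>E. e \<subseteq> X}" using H X(1) unfolding hallE_def by blast
    moreover have "{e\<in>E. e \<subseteq> X} = {e\<in>?E'. e \<subseteq> X}" using X(1) by auto
    ultimately show False using X(3) by simp
  qed
  have iY: "i \<in> Y"
  proof (rule ccontr)
    assume "i \<notin> Y"
    hence "closedE E Y" using closed_remove[OF Y(2)] Y(1) by blast
    hence "card Y \<le> card {e\<in>E. e \<subseteq> Y}" using H Y(1) unfolding hallE_def by blast
    moreover have "{e\<in>E. e \<subseteq> Y} = {e\<in>?E'. e \<subseteq> Y}" using Y(1) by auto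
    ultimately show False using Y(3) by simp
  qed
  have "closedE ?E' (X \<inter> Y)" unfolding closedE_def
  proof (intro ballI allI impI)
    fix x y assume xy: "x \<in> X \<inter> Y" "{x,y} \<in> ?E'"
    have "y \<in> X" using X(2) xy unfolding closedE_def by blast
    moreover have "y \<in> Y" using Y(2) xy unfolding closedE_def by blast
    ultimately show "y \<in> X \<inter> Y" by blast
  qed
  moreover have "i \<notin> X \<inter> Y" "j \<notin> X \<inter> Y" using X(1) Y(1) by auto
  ultimately have cI: "closedE E (X \<inter> Y)" by (rule closed_remove)
  hence hI: "card (X \<inter> Y) \<le> card {e\<in>E. e \<subseteq> X \<inter> Y}" using H X(1) unfolding hallE_def by blast
  have eqI: "{e\<in>E. e \<subseteq> X \<inter> Y} = {e\<in>?E'. e \<subseteq> X} \<inter> {e\<in>?E'. e \<subseteq> Y}"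
    using X(1) by auto
  have cU: "closedE E (X \<union> Y)" unfolding closedE_def
  proof (intro ballI allI impI)
    fix x y assume xy: "x \<in> X \<union> Y" "{x,y} \<in> E"
    show "y \<in> X \<union> Y"
    proof (cases "{x,y} = {i,j}")
      case True thus ?thesis using jX iY by (auto simp: doubleton_eq_iff)
    next
      case False
      hence "{x,y} \<in> ?E'" using xy by simp
      thus ?thesis using xy(1) X(2) Y(2) unfolding closedE_def by blast
    qed
  qed
  hence hU: "card (X \<union> Y) \<le> card {e\<in>E. e \<subseteq> X \<union> Y}" using H X(1) Y(1) unfolding hallE_def by blast
  have eqU: "{e\<in>E. e \<subseteq> X \<union> Y} \<subseteq> insert {i,j} ({e\<in>?E'. e \<subseteq> X} \<union> {e\<in>?E'. e \<subseteq> Y})"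
  proof
    fix e assume e: "e \<in> {e\<in>E. e \<subseteq> X \<union> Y}"
    show "e \<in> insert {i,j} ({e\<in>?E'. e \<subseteq> X} \<union> {e\<in>?E'. e \<subseteq> Y})"
    proof (cases "e = {i,j}")
      case False
      from e c2 have "card e = 2" by auto
      then obtain x y where exy: "e = {x,y}" by (meson card_2_iff)
      have eE': "{x,y} \<in> ?E'" using e False exy by auto
      have "{y,x} \<in> ?E'" using eE' by (simp add: insert_commute)
      show ?thesis
      proof (cases "x \<in> X")
        case True
        hence "y \<in> X" using X(2) eE' unfolding closedE_def by blast
        thus ?thesis using True exy eE' by auto
      next
        case False
        hence "x \<in> Y" using e exy by auto
        hence "y \<in> Y" using Y(2) eE' unfolding closedE_def by blast
        thus ?thesis using \<open>x\<in>Y\<close> exy eE' by auto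
      qed
    qed simp
  qed
  have fE: "finite E" using fin by simp
  have "card {e\<in>E. e \<subseteq> X \<union> Y} \<le> card (insert {i,j} ({e\<in>?E'. e \<subseteq> X} \<union> {e\<in>?E'. e \<subseteq> Y}))"
    by (rule card_mono[OF _ eqU]) (use fE in auto)
  also have "\<dots> \<le> Suc (card ({e\<in>?E'. e \<subseteq> X} \<union> {e\<in>?E'. e \<subseteq> Y}))"
    by (simp add: card_insert_le_m1 card_insert_if)
  finally have A1: "card {e\<in>E. e \<subseteq> X \<union> Y} \<le> Suc (card ({e\<in>?E'. e \<subseteq> X} \<union> {e\<in>?E'. e \<subseteq> Y}))" .
  have A2: "card ({e\<in>?E'. e \<subseteq> X} \<union> {e\<in>?E'. e \<subseteq> Y}) + card ({e\<in>?E'. e \<subseteq> X} \<inter> {e\<in>?E'. e \<subseteq> Y})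
     = card {e\<in>?E'. e \<subseteq> X} + card {e\<in>?E'. e \<subseteq> Y}"
    by (rule card_Un_Int[symmetric]) (use fE in auto)
  have A3: "card (X \<union> Y) + card (X \<inter> Y) = card X + card Y" by (rule card_Un_Int[symmetric]) (use finN in auto)
  have hI': "card (X \<inter> Y) \<le> card ({e\<in>?E'. e \<subseteq> X} \<inter> {e\<in>?E'. e \<subseteq> Y})"
    using hI eqI by simp
  show False using A1 A2 A3 hI' hU X(3) Y(3) by linarith
qed

lemma orient:
  assumes "finite N" "finite E" "\<forall>e\<in>E. card e = 2" "hallE E N"
  shows "\<exists>\<sigma>. \<forall>i\<in>N. {i, \<sigma> i} \<in> E \<and> (\<sigma> i \<in> N \<longrightarrow> \<sigma> (\<sigma> i) \<noteq> i)"
  using assms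
proof (induction "card N" arbitrary: N E rule: less_induct)
  case less
  show ?case
  proof (cases "N = {}")
    case True thus ?thesis by simp
  next
    case Nne: False
    show ?thesis
    proof (cases "\<exists>i\<in>N. \<exists>f. f \<notin> N \<and> {i,f} \<in> E")
      case True
      then obtain i f where i: "i \<in> N" "f \<notin> N" "{i,f} \<in> E" by blast
      have "hallE E (N - {i})" using less.prems(4) unfolding hallE_def by blast
      moreover have "card (N - {i}) < card N" using i less.prems(1) by (meson card_Diff1_less)
      ultimately obtain s where s: "\<forall>x\<in>N-{i}. {x, s x} \<in> E \<and> (s x \<in> N-{i} \<longrightarrow> s (s x) \<noteq> x)"
        using less.hyps[of "N - {i}" E] less.prems by auto
      let ?s = "s(i := f)"
      have "\<forall>x\<in>N. {x, ?s x} \<in> E \<and> (?s x \<in> N \<longrightarrow> ?s (?s x) \<noteq> x)"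
      proof
        fix x assume x: "x \<in> N"
        show "{x, ?s x} \<in> E \<and> (?s x \<in> N \<longrightarrow> ?s (?s x) \<noteq> x)"
        proof (cases "x = i")
          case True thus ?thesis using i by auto
        next
          case False
          thus ?thesis using s x i by auto
        qed
      qed
      thus ?thesis by blast
    next
      case False
      hence clN: "closedE E N" unfolding closedE_def by blast
      have "card N \<le> card {e\<in>E. e \<subseteq> N}" using less.prems(4) clN unfolding hallE_def by blast
      moreover have "card N > 0" using Nne less.prems(1) by auto
      ultimately have "{e\<in>E. e \<subseteq> N} \<noteq> {}" by (metis card.empty le_zero_eq less_numeral_extra(3))
      then obtain e where e: "e \<in> E" "e \<subseteq> N" by auto
      then obtain i0 j0 where ij0: "e = {i0,j0}" "i0 \<noteq> j0" using less.prems(3) by (meson card_2_iff)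
      have "\<exists>i j. {i,j} \<in> E \<and> i \<in> N \<and> j \<in> N \<and> i \<noteq> j \<and> hallE (E - {{i,j}}) (N - {i})"
      proof -
        from two_moves[OF less.prems(1,2,3,4), of i0 j0] e ij0
        have "hallE (E - {{i0,j0}}) (N - {i0}) \<or> hallE (E - {{i0,j0}}) (N - {j0})" by auto
        thus ?thesis
        proof
          assume "hallE (E - {{i0,j0}}) (N - {i0})" thus ?thesis using e ij0 by blast
        next
          assume "hallE (E - {{i0,j0}}) (N - {j0})"
          hence "hallE (E - {{j0,i0}}) (N - {j0})" by (simp add: insert_commute)
          thus ?thesis using e ij0 by (metis insert_commute insert_subset)
        qed
      qed
      then obtain i j where ij: "{i,j} \<in> E" "i \<in> N" "j \<in> N" "i \<noteq> j" "hallE (E - {{i,j}}) (N - {i})"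
        by blast
      have "card (N - {i}) < card N" using ij less.prems(1) by (meson card_Diff1_less)
      then obtain s where s: "\<forall>x\<in>N-{i}. {x, s x} \<in> E - {{i,j}} \<and> (s x \<in> N-{i} \<longrightarrow> s (s x) \<noteq> x)"
        using less.hyps[of "N - {i}" "E - {{i,j}}"] less.prems ij by auto
      let ?s = "s(i := j)"
      have "\<forall>x\<in>N. {x, ?s x} \<in> E \<and> (?s x \<in> N \<longrightarrow> ?s (?s x) \<noteq> x)"
      proof
        fix x assume x: "x \<in> N"
        show "{x, ?s x} \<in> E \<and> (?s x \<in> N \<longrightarrow> ?s (?s x) \<noteq> x)"
        proof (cases "x = i")
          case True
          have "s j \<noteq> i" using s ij by (metis DiffD2 insert_commute insert_Diff_single insert_iff)
          thus ?thesis using True ij by auto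
        next
          case False
          have sx: "{x, s x} \<in> E - {{i,j}}" using s x False by auto
          show ?thesis
          proof (cases "s x = i")
            case True
            have "x \<noteq> j" using sx True by (auto simp: insert_commute)
            thus ?thesis using sx True False by auto
          next
            case False2: False
            thus ?thesis using s x False sx by auto
          qed
        qed
      qed
      thus ?thesis by blast
    qed
  qed
qed




definition crs :: "'a list \<Rightarrow> ('a \<times> 'a) \<Rightarrow> ('a \<times> 'a) \<Rightarrow> bool" where
  "crs \<sigma> i j \<longleftrightarrow>
    (pos \<sigma> (snd i) < pos \<sigma> (snd j) \<and> pos \<sigma> (snd j) < pos \<sigma> (fst i) \<and> pos \<sigma> (fst i) < pos \<sigma> (fst j)) \<or>
    (pos \<sigma> (snd j) < pos \<sigma> (snd i) \<and> pos \<sigma> (snd i) < pos \<sigma> (fst j) \<and> pos \<sigma> (fst j) < pos \<sigma> (fst i))"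

lemma crs_sym: "crs \<sigma> i j \<Longrightarrow> crs \<sigma> j i" unfolding crs_def by auto
lemma crs_irrefl: "\<not> crs \<sigma> i i" unfolding crs_def by auto

definition wd :: "'a list \<Rightarrow> ('a \<times> 'a) \<Rightarrow> nat" where
  "wd \<sigma> e = pos \<sigma> (fst e) - pos \<sigma> (snd e)"

definition nonfree :: "'a set \<Rightarrow> 'a list \<Rightarrow> ('a \<times> 'a) set \<Rightarrow> ('a \<times> 'a) \<Rightarrow> bool" where
  "nonfree V \<sigma> S i \<longleftrightarrow> (\<forall>w\<in>V. pos \<sigma> (snd i) < pos \<sigma> w \<and> pos \<sigma> w < pos \<sigma> (fst i) \<longrightarrow>
      (\<exists>j\<in>S. crs \<sigma> i j \<and> (w = fst j \<or> w = snd j)))"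

lemma ivt_nat:
  fixes f :: "nat \<Rightarrow> nat"
  assumes "a \<le> b" "f a > q" "f b \<le> q"
  shows "\<exists>s. a \<le> s \<and> s < b \<and> f s > q \<and> f (Suc s) \<le> q"
  using assms
proof (induction b)
  case 0 thus ?case by auto
next
  case (Suc b)
  have "a \<noteq> Suc b" using Suc.prems by auto
  hence ab: "a \<le> b" using Suc.prems(1) by simp
  show ?case
  proof (cases "f b > q")
    case True
    thus ?thesis using ab Suc.prems by auto
  next
    case False
    from Suc.IH[OF ab Suc.prems(2)] False show ?thesis by (auto intro: less_SucI)
  qed
qed

lemma cycle_arcs_walk:
  assumes "(v,u) \<in> cycle_arcs xs"
  shows "\<exists>z m. z 0 = u \<and> z m = v \<and> (\<forall>t<m. (z t, z (Suc t)) \<in> cycle_arcs xs)"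
proof -
  let ?n = "length xs"
  from assms obtain j where j: "j < ?n" "v = xs ! j" "u = xs ! ((j+1) mod ?n)"
    unfolding cycle_arcs_def by auto
  define z where "z t = xs ! ((j + 1 + t) mod ?n)" for t
  have "z 0 = u" using j z_def by simp
  moreover have "z (?n - 1) = v"
  proof -
    have "j + 1 + (?n - 1) = j + ?n" using j by simp
    hence "(j + 1 + (?n - 1)) mod ?n = j" using j by simp
    thus ?thesis using z_def j by simp
  qed
  moreover have "\<forall>t. (z t, z (Suc t)) \<in> cycle_arcs xs"
  proof
    fix t
    have "0 < ?n" using j(1) by linarith
    hence "(j + 1 + t) mod ?n < ?n" by simp
    moreover have "((j + 1 + t) mod ?n + 1) mod ?n = (j + 1 + Suc t) mod ?n"
      by (simp add: mod_Suc_eq)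
    ultimately show "(z t, z (Suc t)) \<in> cycle_arcs xs"
      unfolding cycle_arcs_def z_def by (metis (mono_tags, lifting) mem_Collect_eq)
  qed
  ultimately show ?thesis by blast
qed

lemma cycle_arcs3: "cycle_arcs [a,b,c] = {(a,b),(b,c),(c,a)}"
proof -
  have e: "{i. i < length [a,b,c]} = {0,1,2}" by auto
  have "cycle_arcs [a,b,c] = (\<lambda>i. ([a,b,c] ! i, [a,b,c] ! ((i+1) mod length [a,b,c]))) ` {i. i < length [a,b,c]}"
    unfolding cycle_arcs_def by (rule setcompr_eq_image)
  also have "\<dots> = (\<lambda>i. ([a,b,c] ! i, [a,b,c] ! ((i+1) mod 3))) ` {0,1,2}" unfolding e by simp
  finally show ?thesis by simp
qed

lemma finite_cycle_arcs: "finite (cycle_arcs xs)"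
proof -
  have "cycle_arcs xs = (\<lambda>i. (xs ! i, xs ! ((i+1) mod length xs))) ` {..<length xs}"
    unfolding cycle_arcs_def by auto
  thus ?thesis by simp
qed

locale FS =
  fixes V :: "'a set" and A :: "('a \<times> 'a) set" and \<sigma> :: "'a list"
  assumes tour: "tournament V A" and fsw: "fully_sparse_wrt V A \<sigma>"
begin

abbreviation p where "p \<equiv> pos \<sigma>"
definition M where "M = {e. backward_arc A \<sigma> e}"

lemmas T = tour[unfolded tournament_def]
lemmas F = fsw[unfolded fully_sparse_wrt_def]
lemma vo: "vertex_ordering V \<sigma>" by (rule F[THEN conjunct1])
lemma setV2: "distinct \<sigma>" using vo[unfolded vertex_ordering_def] by (rule conjunct1)
lemma setV1: "set \<sigma> = V" using vo[unfolded vertex_ordering_def] by (rule conjunct2)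
lemmas setV = setV1 setV2
lemma finV: "finite V" by (rule T[THEN conjunct1])
lemma AVV: "A \<subseteq> V \<times> V" by (rule T[THEN conjunct2, THEN conjunct1])
lemma irr0: "\<forall>v. (v, v) \<notin> A" by (rule T[THEN conjunct2, THEN conjunct2, THEN conjunct1])
lemma irr: "(v, v) \<notin> A" using irr0 by simp
lemma tot0: "\<forall>u\<in>V. \<forall>v\<in>V. u \<noteq> v \<longrightarrow> ((u, v) \<in> A \<longleftrightarrow> (v, u) \<notin> A)"
  by (rule T[THEN conjunct2, THEN conjunct2, THEN conjunct2])
lemma tot: "u\<in>V \<Longrightarrow> v\<in>V \<Longrightarrow> u \<noteq> v \<Longrightarrow> (u, v) \<in> A \<longleftrightarrow> (v, u) \<notin> A"
  using tot0 by (elim ballE) blast+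

lemma pos_nth: assumes "x \<in> V" shows "p x < length \<sigma> \<and> \<sigma> ! p x = x"
proof -
  have "x \<in> set \<sigma>" using assms setV1 by simp
  then obtain i where i: "i < length \<sigma>" "\<sigma> ! i = x" by (metis in_set_conv_nth)
  have u: "k = i" if "k < length \<sigma> \<and> \<sigma> ! k = x" for k
    using that i nth_eq_iff_index_eq[OF setV2] by metis
  have "p x = i" unfolding pos_def
    by (rule the_equality) (use i u in blast)+
  thus ?thesis using i by simp
qed

lemma pos_inj: "x \<in> V \<Longrightarrow> y \<in> V \<Longrightarrow> p x = p y \<Longrightarrow> x = y"
  using pos_nth by metis

lemma A_V: "(x,y) \<in> A \<Longrightarrow> x \<in> V \<and> y \<in> V \<and> x \<noteq> y"
  using AVV irr by blast

lemma finA: "finite A"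
  using AVV finV by (meson finite_SigmaI finite_subset)

lemma M_A: "e \<in> M \<Longrightarrow> e \<in> A \<and> p (snd e) < p (fst e)"
  unfolding M_def backward_arc_def by auto

lemma A_cases: assumes "(x,y) \<in> A" shows "p x < p y \<or> (x,y) \<in> M"
proof -
  have "x \<noteq> y" "x \<in> V" "y \<in> V" using A_V assms by auto
  hence "p x \<noteq> p y" using pos_inj by blast
  thus ?thesis using assms unfolding M_def backward_arc_def by auto
qed

lemma matching: "\<forall>e f. backward_arc A \<sigma> e \<and> backward_arc A \<sigma> f \<and> e \<noteq> f \<longrightarrow>
        {fst e, snd e} \<inter> {fst f, snd f} = {}"
  by (rule F[THEN conjunct2, THEN conjunct1])

lemma M_match: assumes "e \<in> M" "f \<in> M" "x \<in> {fst e, snd e}" "x \<in> {fst f, snd f}" shows "e = f"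
proof (rule ccontr)
  assume "e \<noteq> f"
  hence "{fst e, snd e} \<inter> {fst f, snd f} = {}" using matching assms(1,2) unfolding M_def by blast
  thus False using assms(3,4) by blast
qed

lemma M_fst_snd: "e \<in> M \<Longrightarrow> f \<in> M \<Longrightarrow> fst e \<noteq> snd f"
proof
  assume a: "e \<in> M" "f \<in> M" "fst e = snd f"
  hence "e = f" using M_match[of e f "fst e"] by simp
  thus False using a M_A[of e] by simp
qed

lemma fwd_arc: assumes "x \<in> V" "y \<in> V" "p x < p y" "(y,x) \<notin> M" shows "(x,y) \<in> A"
proof -
  have "x \<noteq> y" using assms by auto
  have "(y,x) \<notin> A" using assms unfolding M_def backward_arc_def by auto
  thus ?thesis using tot[of x y] assms \<open>x\<noteq>y\<close> by blast
qed

lemma cover0: "\<forall>v\<in>V. \<exists>e. backward_arc A \<sigma> e \<and> (v = fst e \<or> v = snd e)"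
  by (rule F[THEN conjunct2, THEN conjunct2, THEN conjunct2])

lemma cover: "x \<in> V \<Longrightarrow> \<exists>e\<in>M. x = fst e \<or> x = snd e"
  using cover0 unfolding M_def by blast

lemma cyc_sub: "is_dcycle A xs \<Longrightarrow> cycle_arcs xs \<subseteq> A"
  unfolding is_dcycle_def cycle_arcs_def by auto

lemma cyc_back: assumes "is_dcycle A xs" shows "cycle_arcs xs \<inter> M \<noteq> {}"
proof
  assume none: "cycle_arcs xs \<inter> M = {}"
  let ?n = "length xs"
  have n2: "?n \<ge> 2" using assms unfolding is_dcycle_def by simp
  have step: "p (xs ! t) < p (xs ! ((t+1) mod ?n))" if "t < ?n" for t
  proof -
    have "(xs ! t, xs ! ((t+1) mod ?n)) \<in> cycle_arcs xs" unfolding cycle_arcs_def using that by auto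
    moreover hence "(xs ! t, xs ! ((t+1) mod ?n)) \<in> A" using cyc_sub assms by blast
    ultimately show ?thesis using A_cases none by blast
  qed
  have incr: "t < ?n \<Longrightarrow> p (xs ! 0) + t \<le> p (xs ! t)" for t
  proof (induction t)
    case 0 thus ?case by simp
  next
    case (Suc t)
    have "(t+1) mod ?n = Suc t" using Suc.prems by simp
    thus ?case using Suc step[of t] by simp
  qed
  have "p (xs ! 0) + (?n - 1) \<le> p (xs ! (?n - 1))" using n2 incr[of "?n - 1"] by simp
  moreover have "(?n - 1) + 1 = ?n" using n2 by simp
  hence "((?n - 1) + 1) mod ?n = 0" by simp
  hence "p (xs ! (?n - 1)) < p (xs ! 0)" using step[of "?n - 1"] n2 by simp
  ultimately show False using n2 by simp
qed

end


context FS begin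

lemma key:
  assumes C: "C \<subseteq> A"
    and z0: "z 0 = snd i" and zm: "z m = fst i" and zw: "\<forall>t<m. (z t, z (Suc t)) \<in> C"
    and iM: "i \<in> M" and iC: "i \<in> C"
    and wide: "\<forall>e\<in>C\<inter>M. wd \<sigma> e \<le> wd \<sigma> i"
    and SM: "S \<subseteq> M" and iS: "i \<in> S"
    and own: "\<forall>j\<in>S. j \<noteq> i \<longrightarrow> j \<notin> C"
    and nf: "nonfree V \<sigma> S i"
  shows "\<exists>k\<in>S. \<exists>l\<in>S. (k = i \<or> crs \<sigma> i k) \<and> (l = i \<or> crs \<sigma> i l) \<and> (snd k, fst l) \<in> C
           \<and> p (snd l) < p (snd k) \<and> crs \<sigma> k l"
proof -
  define u where "u = snd i"
  define v where "v = fst i"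
  have iuv: "i = (v,u)" unfolding u_def v_def by simp
  have uv: "p u < p v" using M_A[OF iM] unfolding u_def v_def by simp
  have iA: "(v,u) \<in> A" using M_A[OF iM] iuv by simp
  have uV: "u \<in> V" and vV: "v \<in> V" and unv: "u \<noteq> v" using A_V[OF iA] by auto
  have nfw: "\<And>w. w \<in> V \<Longrightarrow> p u < p w \<Longrightarrow> p w < p v \<Longrightarrow> \<exists>j\<in>S. crs \<sigma> i j \<and> (w = fst j \<or> w = snd j)"
    using nf unfolding nonfree_def u_def v_def by blast
  have zV: "z t \<in> V" if "t \<le> m" for t
  proof (cases t)
    case 0 thus ?thesis using z0 uV u_def by simp
  next
    case (Suc s)
    hence "(z s, z t) \<in> C" using zw that by auto
    thus ?thesis using C A_V by blast
  qed
  define G where "G w \<longleftrightarrow> w = u \<or> (p u < p w \<and> p w < p v \<and> (\<exists>k\<in>M. w = snd k))" for w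
  have Gm: "\<not> G (z m)" using zm unv unfolding G_def v_def by simp
  have G0: "G (z 0)" using z0 unfolding G_def u_def by simp
  define t0 where "t0 = (LEAST t. \<not> G (z t))"
  have t0G: "\<not> G (z t0)" unfolding t0_def using Gm by (rule LeastI)
  have t0m: "t0 \<le> m" unfolding t0_def using Gm by (rule Least_le)
  have bef: "\<And>t. t < t0 \<Longrightarrow> G (z t)" unfolding t0_def using not_less_Least by blast
  have "t0 \<noteq> 0"
  proof
    assume "t0 = 0" thus False using t0G G0 by simp
  qed
  then obtain s where s: "t0 = Suc s" by (cases t0) auto
  define a where "a = z s"
  define c where "c = z t0"
  have acC: "(a,c) \<in> C" using zw s t0m unfolding a_def c_def by auto
  have acA: "(a,c) \<in> A" using acC C by auto
  have cV: "c \<in> V" using zV t0m c_def by simp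
  have Ga: "G a" using bef s a_def by simp
  have nGc: "\<not> G c" using t0G c_def by simp
  have ahead: "\<exists>k\<in>M. a = snd k"
    using Ga unfolding G_def using iM u_def by blast
  have pac: "p a < p c"
  proof -
    have "(a,c) \<notin> M"
    proof
      assume acM: "(a,c) \<in> M"
      obtain k where "k \<in> M" "a = snd k" using ahead by blast
      thus False using M_fst_snd[OF acM, of k] acM by simp
    qed
    thus ?thesis using A_cases[OF acA] by simp
  qed
  have pua: "p u \<le> p a" using Ga unfolding G_def by auto
  have pcv: "p c \<le> p v"
  proof (rule ccontr)
    assume "\<not> p c \<le> p v"
    hence "p (z t0) > p v" using c_def by simp
    moreover have "p (z m) \<le> p v" using zm v_def by simp
    ultimately obtain s' where s': "t0 \<le> s'" "s' < m" "p (z s') > p v" "p (z (Suc s')) \<le> p v"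
      using ivt_nat[where f="\<lambda>t. p (z t)" and a=t0 and b=m and q="p v"] t0m by auto
    define e where "e = (z s', z (Suc s'))"
    have eC: "e \<in> C" using zw s' e_def by auto
    have "p (snd e) < p (fst e)" using s' e_def by simp
    hence eM: "e \<in> M" using A_cases[of "fst e" "snd e"] eC C by auto
    define y where "y = z (Suc s')"
    have yV: "y \<in> V" using zV s' y_def by simp
    have ye: "y = snd e" using y_def e_def by simp
    have "p y \<le> p v" using s' y_def by simp
    moreover have "p y \<noteq> p v"
    proof
      assume "p y = p v"
      hence "y = v" using pos_inj yV vV by blast
      thus False using M_fst_snd[OF iM eM] ye v_def by simp
    qed
    moreover have "\<not> (p u < p y \<and> p y < p v)"
    proof
      assume "p u < p y \<and> p y < p v"
      then obtain j where j: "j \<in> S" "crs \<sigma> i j" "y = fst j \<or> y = snd j" using nfw yV by blast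
      have "j \<in> M" using j SM by auto
      hence "e = j" using M_match[OF eM, of j y] ye j(3) by auto
      moreover have "j \<noteq> i" using j(2) crs_irrefl by metis
      ultimately show False using own j(1) eC by auto
    qed
    moreover have "p y \<noteq> p u"
    proof
      assume "p y = p u"
      hence "y = u" using pos_inj yV uV by blast
      hence "e = i" using M_match[OF eM iM, of y] ye u_def by simp
      hence "z s' = v" using e_def v_def by (metis fst_conv)
      thus False using s'(3) by simp
    qed
    ultimately have "p y < p u" by linarith
    hence "wd \<sigma> e > wd \<sigma> i" unfolding wd_def using s' e_def y_def u_def v_def uv by simp
    moreover have "wd \<sigma> e \<le> wd \<sigma> i" using wide eC eM by blast
    ultimately show False by simp
  qed
  have puc: "p u < p c" using pua pac by simp
  obtain l where l: "l \<in> S" "l = i \<or> crs \<sigma> i l" "c = fst l" "l \<noteq> i \<Longrightarrow> p c < p v"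
  proof (cases "c = v")
    case True thus ?thesis using that iS v_def by blast
  next
    case False
    hence "p c \<noteq> p v" using pos_inj cV vV by blast
    hence pcv': "p c < p v" using pcv by simp
    then obtain j where j: "j \<in> S" "crs \<sigma> i j" "c = fst j \<or> c = snd j" using nfw cV puc by blast
    have "c \<noteq> snd j"
    proof
      assume "c = snd j"
      hence "G c" unfolding G_def using puc pcv' j(1) SM by blast
      thus False using nGc by simp
    qed
    hence "c = fst j" using j by simp
    thus ?thesis using that j pcv' by blast
  qed
  obtain k where k: "k \<in> S" "k = i \<or> crs \<sigma> i k" "a = snd k" "k \<noteq> i \<Longrightarrow> p u < p a \<and> p a < p v"
  proof (cases "a = u")
    case True thus ?thesis using that iS u_def by blast
  next
    case False
    hence ai: "p u < p a \<and> p a < p v" and k': "\<exists>k'\<in>M. a = snd k'" using Ga unfolding G_def by auto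
    obtain k' where k'': "k' \<in> M" "a = snd k'" using k' by blast
    have aV: "a \<in> V" using acA A_V by blast
    obtain j where j: "j \<in> S" "crs \<sigma> i j" "a = fst j \<or> a = snd j" using nfw[OF aV] ai by blast
    have "k' = j" using M_match[OF k''(1), of j a] j(1,3) SM k''(2) by auto
    thus ?thesis using that j k'' ai by blast
  qed
  have notboth: "\<not> (k = i \<and> l = i)"
  proof
    assume "k = i \<and> l = i"
    hence "(u, v) \<in> A" using acA k(3) l(3) u_def v_def by simp
    thus False using tot[OF uV vV unv] iA by simp
  qed
  have fk: "p v < p (fst k)" if "k \<noteq> i"
  proof -
    have "crs \<sigma> i k" using k(2) that by simp
    moreover have "p u < p (snd k) \<and> p (snd k) < p v" using k(3,4) that by simp
    ultimately show ?thesis unfolding crs_def u_def v_def by auto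
  qed
  have sl: "p (snd l) < p u" if "l \<noteq> i"
  proof -
    have "crs \<sigma> i l" using l(2) that by simp
    moreover have "p u < p (fst l) \<and> p (fst l) < p v" using l(3,4) that puc by simp
    ultimately show ?thesis unfolding crs_def u_def v_def by auto
  qed
  have o1: "p (snd l) < p (snd k)"
  proof (cases "l = i")
    case True
    hence "k \<noteq> i" using notboth by simp
    thus ?thesis using k(3,4) True u_def by simp
  next
    case False thus ?thesis using sl pua k(3) by fastforce
  qed
  have o2: "p (snd k) < p (fst l)" using pac k(3) l(3) by simp
  have o3: "p (fst l) < p (fst k)"
  proof (cases "k = i")
    case True
    hence "l \<noteq> i" using notboth by simp
    thus ?thesis using l(3,4) True v_def by simp
  next
    case False thus ?thesis using fk pcv l(3) by fastforce
  qed
  have "crs \<sigma> k l" unfolding crs_def using o1 o2 o3 by simp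
  moreover have "(snd k, fst l) \<in> C" using acC k(3) l(3) by simp
  ultimately show ?thesis using k l o1 by blast
qed

end



lemma dcycle3:
  assumes "distinct [a,b,c]" "(a,b) \<in> A" "(b,c) \<in> A" "(c,a) \<in> A"
  shows "is_dcycle A [a,b,c]"
  unfolding is_dcycle_def
proof (intro conjI allI impI)
  show "distinct [a,b,c]" by fact
  show "2 \<le> length [a,b,c]" by simp
  fix t assume "t < length [a,b,c]"
  hence "t = 0 \<or> t = 1 \<or> t = 2" by auto
  thus "([a,b,c] ! t, [a,b,c] ! ((t + 1) mod length [a,b,c])) \<in> A" using assms by auto
qed

lemma ex_max_wd:
  fixes f :: "'b \<Rightarrow> nat"
  assumes "finite X" "X \<noteq> {}"
  shows "\<exists>x\<in>X. \<forall>y\<in>X. f y \<le> f x"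
proof -
  have "Max (f ` X) \<in> f ` X" using assms by simp
  then obtain x where x: "x \<in> X" "f x = Max (f ` X)" by auto
  have "\<forall>y\<in>X. f y \<le> f x" using x assms by simp
  thus ?thesis using x by blast
qed

context FS begin

lemma main_le:
  assumes P: "cycle_packing A P"
  shows "\<exists>Q. triangle_packing A Q \<and> card Q = card P"
proof -
  have Pc: "\<forall>C\<in>P. \<exists>xs. is_dcycle A xs \<and> C = cycle_arcs xs" using P[unfolded cycle_packing_def] by (rule conjunct1)
  have Pd: "\<forall>C\<in>P. \<forall>D\<in>P. C \<noteq> D \<longrightarrow> C \<inter> D = {}" using P[unfolded cycle_packing_def] by (rule conjunct2)
  have Pc': "\<exists>xs. is_dcycle A xs \<and> C = cycle_arcs xs" if "C \<in> P" for C
    by (rule bspec[OF Pc that])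
  have CA: "C \<subseteq> A" if CP: "C \<in> P" for C
  proof -
    obtain xs where xs: "is_dcycle A xs" "C = cycle_arcs xs" using Pc'[OF CP] by (elim exE conjE)
    have "cycle_arcs xs \<subseteq> A" using xs(1) by (rule cyc_sub)
    thus ?thesis using xs(2) by (simp only:)
  qed
  have finP: "finite P"
  proof -
    have "P \<subseteq> Pow A" using CA by blast
    moreover have "finite (Pow A)" using finA by simp
    ultimately show ?thesis by (rule finite_subset)
  qed
  have CM: "finite (C \<inter> M) \<and> C \<inter> M \<noteq> {}" if CP: "C \<in> P" for C
  proof -
    obtain xs where xs: "is_dcycle A xs" "C = cycle_arcs xs" using Pc'[OF CP] by (elim exE conjE)
    have "finite C" using xs(2) finite_cycle_arcs by simp
    hence "finite (C \<inter> M)" by simp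
    moreover have "C \<inter> M \<noteq> {}" using cyc_back[OF xs(1)] xs(2) by simp
    ultimately show ?thesis by simp
  qed
  have exb: "\<forall>C\<in>P. \<exists>e. e \<in> C \<inter> M \<and> (\<forall>e'\<in>C\<inter>M. wd \<sigma> e' \<le> wd \<sigma> e)"
  proof
    fix C assume CP: "C \<in> P"
    have ex: "\<exists>x\<in>C \<inter> M. \<forall>y\<in>C \<inter> M. wd \<sigma> y \<le> wd \<sigma> x"
      using CM[OF CP] by (intro ex_max_wd) auto
    from ex obtain e where e: "e \<in> C \<inter> M" "\<forall>e'\<in>C\<inter>M. wd \<sigma> e' \<le> wd \<sigma> e" ..
    show "\<exists>e. e \<in> C \<inter> M \<and> (\<forall>e'\<in>C\<inter>M. wd \<sigma> e' \<le> wd \<sigma> e)"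
      by (rule exI[of _ e], rule conjI, fact e(1), fact e(2))
  qed
  from bchoice[OF exb] obtain b where bp0: "\<forall>C\<in>P. b C \<in> C \<inter> M \<and> (\<forall>e'\<in>C\<inter>M. wd \<sigma> e' \<le> wd \<sigma> (b C))" ..
  have bp: "b C \<in> C \<inter> M \<and> (\<forall>e'\<in>C\<inter>M. wd \<sigma> e' \<le> wd \<sigma> (b C))" if CP: "C \<in> P" for C
    by (rule bspec[OF bp0 CP])
  have binj: "inj_on b P"
  proof (rule inj_onI)
    fix C D assume CD: "C \<in> P" "D \<in> P" "b C = b D"
    have "b C \<in> C \<inter> D" using bp[OF CD(1)] bp[OF CD(2)] CD(3) by simp
    thus "C = D" using Pd CD(1,2) by blast
  qed
  define S where "S = b ` P"
  have cardS: "card S = card P" unfolding S_def using binj by (rule card_image)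
  have finS: "finite S" unfolding S_def using finP by simp
  have SM: "S \<subseteq> M" unfolding S_def using bp by blast
  have own: "\<forall>j\<in>S. j \<noteq> b C \<longrightarrow> j \<notin> C" if "C \<in> P" for C
  proof (intro ballI impI)
    fix j assume j: "j \<in> S" "j \<noteq> b C"
    then obtain D where D: "D \<in> P" "j = b D" unfolding S_def by blast
    have DC: "D \<noteq> C" using D j by blast
    have "j \<in> D" using bp[OF D(1)] D(2) by simp
    moreover have "D \<inter> C = {}" using Pd D(1) that DC by blast
    ultimately show "j \<notin> C" by blast
  qed
  define N where "N = {i\<in>S. nonfree V \<sigma> S i}"
  define E where "E = {{k,l} | k l. k \<in> S \<and> l \<in> S \<and> crs \<sigma> k l}"
  have finE: "finite E"
  proof -
    have "E \<subseteq> (\<lambda>(k,l). {k,l}) ` (S \<times> S)" unfolding E_def by auto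
    thus ?thesis using finS by (meson finite_SigmaI finite_imageI finite_subset)
  qed
  have E2: "\<forall>e\<in>E. card e = 2"
  proof
    fix e assume "e \<in> E"
    then obtain k l where "e = {k,l}" "crs \<sigma> k l" unfolding E_def by blast
    moreover have "k \<noteq> l" using calculation(2) crs_irrefl by metis
    ultimately show "card e = 2" by simp
  qed
  have Eedge: "x \<in> S \<and> crs \<sigma> i x" if xE: "{i,x} \<in> E" for i x
  proof -
    obtain k l where kl: "{i,x} = {k,l}" "k \<in> S" "l \<in> S" "crs \<sigma> k l" using xE unfolding E_def by blast
    show ?thesis
    proof (cases "i = k")
      case True
      hence "x = l" using kl(1) crs_irrefl kl(4) by (metis doubleton_eq_iff)
      thus ?thesis using True kl by simp
    next
      case False
      hence "i = l" "x = k" using kl(1) by (auto simp: doubleton_eq_iff)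
      thus ?thesis using kl crs_sym by blast
    qed
  qed
  have inE: "{i,x} \<in> E" if "i \<in> S" "x \<in> S" "crs \<sigma> i x" for i x
    unfolding E_def using that by blast
  define Qk where "Qk i k l \<longleftrightarrow> k \<in> S \<and> l \<in> S \<and> (k = i \<or> crs \<sigma> i k) \<and> (l = i \<or> crs \<sigma> i l)
      \<and> (\<exists>C\<in>P. b C = i \<and> (snd k, fst l) \<in> C) \<and> p (snd l) < p (snd k) \<and> crs \<sigma> k l" for i k l
  have Qex: "\<exists>k l. Qk i k l" if "i \<in> N" for i
  proof -
    have iS: "i \<in> S" and nfi: "nonfree V \<sigma> S i" using that unfolding N_def by auto
    obtain C where C: "C \<in> P" "i = b C" using iS unfolding S_def by blast
    obtain xs where xs: "is_dcycle A xs" "C = cycle_arcs xs" using Pc'[OF C(1)] by (elim exE conjE)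
    have iC: "(fst i, snd i) \<in> cycle_arcs xs" using bp[OF C(1)] C(2) xs(2) by simp
    obtain z m where z: "z 0 = snd i" "z m = fst i" "\<forall>t<m. (z t, z (Suc t)) \<in> cycle_arcs xs"
      using cycle_arcs_walk[OF iC] by blast
    have "\<exists>k\<in>S. \<exists>l\<in>S. (k = i \<or> crs \<sigma> i k) \<and> (l = i \<or> crs \<sigma> i l) \<and> (snd k, fst l) \<in> C
           \<and> p (snd l) < p (snd k) \<and> crs \<sigma> k l"
    proof (rule key[where z=z and m=m])
      show "C \<subseteq> A" using CA C by blast
      show "z 0 = snd i" "z m = fst i" using z by auto
      show "\<forall>t<m. (z t, z (Suc t)) \<in> C" using z xs by simp
      show "i \<in> M" "i \<in> C" using bp[OF C(1)] C(2) by auto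
      show "\<forall>e\<in>C\<inter>M. wd \<sigma> e \<le> wd \<sigma> i" using bp[OF C(1)] C(2) by simp
      show "S \<subseteq> M" "i \<in> S" using SM iS by auto
      show "\<forall>j\<in>S. j \<noteq> i \<longrightarrow> j \<notin> C" using own[OF C(1)] C(2) by simp
      show "nonfree V \<sigma> S i" by fact
    qed
    thus ?thesis unfolding Qk_def using C by blast
  qed
  define kl where "kl i = (SOME x. Qk i (fst x) (snd x))" for i
  have klQ: "Qk i (fst (kl i)) (snd (kl i))" if "i \<in> N" for i
  proof -
    note iN = that
    obtain k l where "Qk i k l" using Qex[OF iN] by blast
    hence "\<exists>x. Qk i (fst x) (snd x)" by (metis fst_conv snd_conv)
    thus ?thesis unfolding kl_def by (rule someI_ex)
  qed
  define \<pi> where "\<pi> i = {fst (kl i), snd (kl i)}" for i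
  have hall: "hallE E N" unfolding hallE_def
  proof (intro allI impI)
    fix X assume X: "X \<subseteq> N" "closedE E X"
    have img: "\<pi> ` X \<subseteq> {e\<in>E. e \<subseteq> X}"
    proof
      fix e assume "e \<in> \<pi> ` X"
      then obtain i where i: "i \<in> X" "e = \<pi> i" by blast
      have iN: "i \<in> N" using i X by auto
      hence iS: "i \<in> S" unfolding N_def by simp
      have Q: "Qk i (fst (kl i)) (snd (kl i))" using klQ iN by simp
      let ?k = "fst (kl i)" and ?l = "snd (kl i)"
      have kX: "?k \<in> X"
      proof (cases "?k = i")
        case True thus ?thesis using i by simp
      next
        case False
        hence "{i, ?k} \<in> E" using Q iS inE unfolding Qk_def by blast
        thus ?thesis using X(2) i(1) unfolding closedE_def by blast
      qed
      have lX: "?l \<in> X"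
      proof (cases "?l = i")
        case True thus ?thesis using i by simp
      next
        case False
        hence "{i, ?l} \<in> E" using Q iS inE unfolding Qk_def by blast
        thus ?thesis using X(2) i(1) unfolding closedE_def by blast
      qed
      have "e \<in> E" using Q i(2) inE unfolding Qk_def \<pi>_def by blast
      thus "e \<in> {e\<in>E. e \<subseteq> X}" using kX lX i(2) unfolding \<pi>_def by simp
    qed
    have inj: "inj_on \<pi> X"
    proof (rule inj_onI)
      fix i j assume ij: "i \<in> X" "j \<in> X" "\<pi> i = \<pi> j"
      have iN: "i \<in> N" and jN: "j \<in> N" using ij(1,2) X(1) by blast+
      have Qi: "Qk i (fst (kl i)) (snd (kl i))" by (rule klQ[OF iN])
      have Qj: "Qk j (fst (kl j)) (snd (kl j))" by (rule klQ[OF jN])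
      have "kl i = kl j"
      proof -
        have o1: "p (snd (snd (kl i))) < p (snd (fst (kl i)))" using Qi unfolding Qk_def by simp
        have o2: "p (snd (snd (kl j))) < p (snd (fst (kl j)))" using Qj unfolding Qk_def by simp
        have "{fst (kl i), snd (kl i)} = {fst (kl j), snd (kl j)}" using ij(3) unfolding \<pi>_def by simp
        hence "(fst (kl i) = fst (kl j) \<and> snd (kl i) = snd (kl j)) \<or>
               (fst (kl i) = snd (kl j) \<and> snd (kl i) = fst (kl j))" by (auto simp: doubleton_eq_iff)
        thus ?thesis using o1 o2 by (metis order.asym prod_eq_iff)
      qed
      obtain C where C: "C \<in> P" "b C = i" "(snd (fst (kl i)), fst (snd (kl i))) \<in> C"
        using Qi unfolding Qk_def by blast
      obtain D where D: "D \<in> P" "b D = j" "(snd (fst (kl j)), fst (snd (kl j))) \<in> D"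
        using Qj unfolding Qk_def by blast
      have "C = D" using Pd C D \<open>kl i = kl j\<close> by auto
      thus "i = j" using C D by simp
    qed
    have "finite {e\<in>E. e \<subseteq> X}" using finE by simp
    thus "card X \<le> card {e\<in>E. e \<subseteq> X}" using card_inj_on_le[OF inj img] by simp
  qed
  have finN: "finite N" using finS unfolding N_def by simp
  obtain og where og: "\<forall>i\<in>N. {i, og i} \<in> E \<and> (og i \<in> N \<longrightarrow> og (og i) \<noteq> i)"
    using orient[OF finN finE E2 hall] by blast
  have ogS: "og i \<in> S \<and> crs \<sigma> i (og i)" if iN: "i \<in> N" for i
  proof -
    have "{i, og i} \<in> E" using bspec[OF og iN] by (rule conjunct1)
    thus ?thesis by (rule Eedge)
  qed
  define Fw where "Fw i x \<longleftrightarrow> x \<in> V \<and> p (snd i) < p x \<and> p x < p (fst i) \<and>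
             \<not> (\<exists>j\<in>S. crs \<sigma> i j \<and> (x = fst j \<or> x = snd j))" for i x
  have exw: "\<forall>i\<in>S - N. \<exists>x. Fw i x"
  proof
    fix i assume i: "i \<in> S - N"
    hence "\<not> nonfree V \<sigma> S i" unfolding N_def by simp
    thus "\<exists>x. Fw i x" unfolding nonfree_def Fw_def by blast
  qed
  from bchoice[OF exw] obtain wf where wf: "\<forall>i\<in>S - N. Fw i (wf i)" ..
  define w where "w i = (if i \<in> N then
      (if p (snd i) < p (fst (og i)) \<and> p (fst (og i)) < p (fst i) then fst (og i) else snd (og i))
      else wf i)" for i
  have endV: "fst e \<in> V \<and> snd e \<in> V" if eM: "e \<in> M" for e
    using M_A[OF eM] A_V[of "fst e" "snd e"] by simp
  have Wfree: "Fw i (w i)" if "i \<in> S" "i \<notin> N" for i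
  proof -
    have "Fw i (wf i)" using wf that by blast
    thus ?thesis unfolding w_def using that(2) by simp
  qed
  have W1: "w i \<in> V \<and> p (snd i) < p (w i) \<and> p (w i) < p (fst i)" if iS: "i \<in> S" for i
  proof (cases "i \<in> N")
    case True
    have j: "og i \<in> S" "crs \<sigma> i (og i)" using ogS True by auto
    have "og i \<in> M" using j SM by auto
    hence jV: "fst (og i) \<in> V" "snd (og i) \<in> V" using endV by auto
    show ?thesis using j(2) jV True unfolding w_def crs_def by auto
  next
    case False
    thus ?thesis using Wfree[OF iS False] unfolding Fw_def by blast
  qed
  have W2: "\<not> (\<exists>j\<in>S. crs \<sigma> i j \<and> (w i = fst j \<or> w i = snd j))" if "i \<in> S" "i \<notin> N" for i
    using Wfree[OF that] unfolding Fw_def by blast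
  have W3: "w i = fst (og i) \<or> w i = snd (og i)" if iN: "i \<in> N" for i
    using iN unfolding w_def by simp
  have vdisj: "i = j" if "i \<in> M" "j \<in> M" "x \<in> {fst i, snd i}" "x \<in> {fst j, snd j}" for i j x
    by (rule M_match[OF that])
  have mutual: False if ij: "i \<in> S" "j \<in> S" "i \<noteq> j" "w i = fst j" "w j = snd i" for i j
  proof -
    have iM: "i \<in> M" and jM: "j \<in> M" using ij SM by auto
    have a1: "p (snd i) < p (fst j) \<and> p (fst j) < p (fst i)" using W1[OF ij(1)] ij(4) by simp
    have a2: "p (snd j) < p (snd i) \<and> p (snd i) < p (fst j)" using W1[OF ij(2)] ij(5) by simp
    have cij: "crs \<sigma> i j" unfolding crs_def using a1 a2 by simp
    have iN: "i \<in> N" using W2[OF ij(1)] cij ij(2,4) by blast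
    have jN: "j \<in> N" using W2[OF ij(2)] crs_sym[OF cij] ij(1,5) by blast
    have oi: "og i = j"
    proof -
      have "og i \<in> M" using ogS[OF iN] SM by auto
      thus ?thesis using vdisj[of "og i" j "w i"] W3[OF iN] jM ij(4) by auto
    qed
    have oj: "og j = i"
    proof -
      have "og j \<in> M" using ogS[OF jN] SM by auto
      thus ?thesis using vdisj[of "og j" i "w j"] W3[OF jN] iM ij(5) by auto
    qed
    show False using og jN iN oi oj by auto
  qed
  define tri where "tri i = cycle_arcs [snd i, w i, fst i]" for i
  have tri_eq: "tri i = {(snd i, w i), (w i, fst i), (fst i, snd i)}" for i
    unfolding tri_def by (rule cycle_arcs3)
  have tri_cyc: "is_dcycle A [snd i, w i, fst i]" if "i \<in> S" for i
  proof (rule dcycle3)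
    have iM: "i \<in> M" using that SM by auto
    have W: "w i \<in> V" "p (snd i) < p (w i)" "p (w i) < p (fst i)" using W1[OF that] by auto
    have iV: "fst i \<in> V" "snd i \<in> V" using endV iM by auto
    show "distinct [snd i, w i, fst i]" using W by auto
    show "(snd i, w i) \<in> A"
    proof (rule fwd_arc)
      show "snd i \<in> V" "w i \<in> V" "p (snd i) < p (w i)" using W iV by auto
      show "(w i, snd i) \<notin> M"
      proof
        assume "(w i, snd i) \<in> M"
        hence "(w i, snd i) = i" using vdisj[of "(w i, snd i)" i "snd i"] iM by simp
        thus False using W by (metis fst_conv less_asym)
      qed
    qed
    show "(w i, fst i) \<in> A"
    proof (rule fwd_arc)
      show "w i \<in> V" "fst i \<in> V" "p (w i) < p (fst i)" using W iV by auto
      show "(fst i, w i) \<notin> M"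
      proof
        assume "(fst i, w i) \<in> M"
        hence "(fst i, w i) = i" using vdisj[of "(fst i, w i)" i "fst i"] iM by simp
        thus False using W by (metis snd_conv less_asym)
      qed
    qed
    show "(fst i, snd i) \<in> A" using M_A[OF iM] by simp
  qed
  have tri_disj: "tri i \<inter> tri j = {}" if "i \<in> S" "j \<in> S" "i \<noteq> j" for i j
  proof -
    have iM: "i \<in> M" and jM: "j \<in> M" using that SM by auto
    have d1: "fst i \<noteq> fst j" "snd i \<noteq> snd j" "fst i \<noteq> snd j" "snd i \<noteq> fst j"
      using vdisj[OF iM jM] that(3) by auto
    have m1: "\<not> (w i = fst j \<and> w j = snd i)" using mutual[of i j] that by blast
    have m2: "\<not> (w j = fst i \<and> w i = snd j)" using mutual[of j i] that by blast
    show ?thesis unfolding tri_eq using d1 m1 m2 by auto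
  qed
  have tri_inj: "inj_on tri S"
  proof (rule inj_onI)
    fix i j assume ij: "i \<in> S" "j \<in> S" "tri i = tri j"
    show "i = j"
    proof (rule ccontr)
      assume "i \<noteq> j"
      hence "tri i \<inter> tri j = {}" using tri_disj ij by blast
      moreover have "tri i \<noteq> {}" unfolding tri_eq by simp
      ultimately show False using ij(3) by simp
    qed
  qed
  define Q where "Q = tri ` S"
  have "triangle_packing A Q" unfolding triangle_packing_def
  proof (intro conjI ballI impI)
    fix T assume "T \<in> Q"
    then obtain i where i: "i \<in> S" "T = tri i" unfolding Q_def by blast
    show "\<exists>xs. is_dcycle A xs \<and> length xs = 3 \<and> T = cycle_arcs xs"
      using tri_cyc[OF i(1)] i(2) unfolding tri_def by (intro exI[of _ "[snd i, w i, fst i]"]) simp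
  next
    fix T T' assume "T \<in> Q" "T' \<in> Q" "T \<noteq> T'"
    then obtain i j where "i \<in> S" "j \<in> S" "T = tri i" "T' = tri j" "i \<noteq> j" unfolding Q_def by blast
    thus "T \<inter> T' = {}" using tri_disj by blast
  qed
  moreover have "card Q = card P" unfolding Q_def using card_image[OF tri_inj] cardS by simp
  ultimately show ?thesis by blast
qed

end



lemma cyc_pack_sub:
  assumes "cycle_packing A P" shows "P \<subseteq> Pow A"
proof
  fix C assume CP: "C \<in> P"
  have "\<forall>C\<in>P. \<exists>xs. is_dcycle A xs \<and> C = cycle_arcs xs"
    using assms[unfolded cycle_packing_def] by (rule conjunct1)
  then obtain xs where xs: "is_dcycle A xs" "C = cycle_arcs xs" using CP by blast
  have "cycle_arcs xs \<subseteq> A" using xs(1) unfolding is_dcycle_def cycle_arcs_def by auto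
  thus "C \<in> Pow A" using xs(2) by simp
qed

lemma tri_cyc_pack: assumes T: "triangle_packing A P" shows "cycle_packing A P"
proof -
  have t1: "\<forall>S\<in>P. \<exists>xs. is_dcycle A xs \<and> length xs = 3 \<and> S = cycle_arcs xs"
    using T[unfolded triangle_packing_def] by (rule conjunct1)
  have t2: "\<forall>S\<in>P. \<forall>T\<in>P. S \<noteq> T \<longrightarrow> S \<inter> T = {}"
    using T[unfolded triangle_packing_def] by (rule conjunct2)
  have c1: "\<forall>S\<in>P. \<exists>xs. is_dcycle A xs \<and> S = cycle_arcs xs"
  proof
    fix S assume "S \<in> P"
    then obtain xs where "is_dcycle A xs \<and> length xs = 3 \<and> S = cycle_arcs xs" using t1 by blast
    thus "\<exists>xs. is_dcycle A xs \<and> S = cycle_arcs xs" by blast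
  qed
  show ?thesis unfolding cycle_packing_def using c1 t2 by (rule conjI)
qed

theorem mainTheorem9:
  fixes V :: "'a set" and A :: "('a \<times> 'a) set"
  assumes "tournament V A" and "fully_sparse V A"
  shows "max_cycle_packing A = max_triangle_packing A"
proof -
  obtain \<sigma> where fsw: "fully_sparse_wrt V A \<sigma>" using assms(2) unfolding fully_sparse_def by blast
  interpret FS V A \<sigma> using assms(1) fsw by unfold_locales
  define CS where "CS = {card P | P. cycle_packing A P}"
  define TS where "TS = {card P | P. triangle_packing A P}"
  have bnd: "CS \<subseteq> {..card (Pow A)}"
  proof
    fix n assume "n \<in> CS"
    then obtain P where P: "cycle_packing A P" "n = card P" unfolding CS_def by blast
    have "card P \<le> card (Pow A)" using cyc_pack_sub[OF P(1)] finA by (simp add: card_mono)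
    thus "n \<in> {..card (Pow A)}" using P(2) by simp
  qed
  have finCS: "finite CS" using bnd by (rule finite_subset) simp
  have TC: "TS \<subseteq> CS"
  proof
    fix n assume "n \<in> TS"
    then obtain P where P: "triangle_packing A P" "n = card P" unfolding TS_def by blast
    have "cycle_packing A P" using P(1) by (rule tri_cyc_pack)
    thus "n \<in> CS" unfolding CS_def using P(2) by blast
  qed
  have finTS: "finite TS" using TC finCS by (rule finite_subset)
  have e1: "triangle_packing A {}" unfolding triangle_packing_def by simp
  hence "card ({}::('a \<times> 'a) set set) \<in> TS" unfolding TS_def by blast
  hence neT: "TS \<noteq> {}" by blast
  have le1: "Max TS \<le> Max CS" using Max_mono[OF TC neT finCS] .
  have "Max CS \<in> CS" using finCS TC neT by (intro Max_in) auto
  then obtain P where P: "cycle_packing A P" "Max CS = card P" unfolding CS_def by blast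
  obtain Q where Q: "triangle_packing A Q" "card Q = card P" using main_le[OF P(1)] by blast
  have "card Q \<in> TS" unfolding TS_def using Q(1) by blast
  hence "card Q \<le> Max TS" using finTS by simp
  hence le2: "Max CS \<le> Max TS" using P(2) Q(2) by simp
  have m1: "max_cycle_packing A = Max CS" unfolding max_cycle_packing_def CS_def by (rule refl)
  have m2: "max_triangle_packing A = Max TS" unfolding max_triangle_packing_def TS_def by (rule refl)
  show ?thesis using m1 m2 le1 le2 by linarith
qed


end
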